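(* For all integers $n\ge0$ and $k\ge1$, $$\det\big(a(n+i+j+1,4k)\big)_{0\le i,j\le 2k-1}=(-1)^{k(n-1)}(2k+1)^n$$ and $$\det\big(a(n+i+j,4k-2)\big)_{0\le i,j\le 2k-1}=(-1)^{kn}2^n.$$
   Context: For integers $N,K\ge0$, $a(N,K)=\sum_{s=0}^{K}C_N^{(K)}(0\to s)$, where $C_N^{(K)}(0\to s)$ is the number of lattice paths with steps $(1,1),(1,-1)$ from $(0,0)$ to $(N,s)$ never going below the $x$-axis nor above $y=K$; i.e. $a(N,K)$ is the number of such paths of length $N$ starting at height $0$ with arbitrary end height. *)

theory Defs
  imports "Jordan_Normal_Form.Determinant"
begin

text \<open>A step list: True = up-step (1,1), False = down-step (1,-1).
  The height after the first i steps of a path starting at height 0.\<close>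
definition height :: "bool list \<Rightarrow> nat \<Rightarrow> int" where
  "height ss i = (\<Sum>s\<leftarrow>take i ss. if s then 1 else -1)"

definition bounded_paths :: "nat \<Rightarrow> nat \<Rightarrow> bool list set" where
  "bounded_paths N K = {ss. length ss = N \<and>
     (\<forall>i\<le>N. 0 \<le> height ss i \<and> height ss i \<le> int K)}"

definition a :: "nat \<Rightarrow> nat \<Rightarrow> int" where
  "a N K = int (card (bounded_paths N K))"

end

theory Submission
  imports Defs
begin


lemma height_0[simp]: "height ss 0 = 0" by (simp add: height_def)

lemma height_snoc_le: "i \<le> length ss \<Longrightarrow> height (ss@[s]) i = height ss i"
  by (simp add: height_def)

lemma height_snoc_end: "height (ss@[s]) (Suc (length ss)) = height ss (length ss) + (if s then 1 else -1)"
  by (simp add: height_def)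

lemma bp_snoc:
  assumes "length p = N"
  shows "p@[s] \<in> bounded_paths (Suc N) K \<longleftrightarrow> p \<in> bounded_paths N K \<and>
     0 \<le> height p N + (if s then 1 else -1) \<and> height p N + (if s then 1 else -1) \<le> int K"
proof
  assume h: "p@[s] \<in> bounded_paths (Suc N) K"
  have 1: "\<forall>i\<le>Suc N. 0 \<le> height (p@[s]) i \<and> height (p@[s]) i \<le> int K"
    using h by (simp add: bounded_paths_def)
  have "p \<in> bounded_paths N K" unfolding bounded_paths_def
  proof (intro CollectI conjI allI impI)
    fix i assume i: "i \<le> N"
    then have "i \<le> Suc N" by simp
    then have "0 \<le> height (p@[s]) i \<and> height (p@[s]) i \<le> int K" using 1 by blast
    then show "0 \<le> height p i" "height p i \<le> int K" using height_snoc_le[of i p s] i assms by auto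
  qed (use assms in auto)
  moreover have "height (p@[s]) (Suc N) = height p N + (if s then 1 else -1)"
    using height_snoc_end[of p s] assms by simp
  ultimately show "p \<in> bounded_paths N K \<and>
     0 \<le> height p N + (if s then 1 else -1) \<and> height p N + (if s then 1 else -1) \<le> int K"
    using 1 by (metis order_refl)
next
  assume h: "p \<in> bounded_paths N K \<and>
     0 \<le> height p N + (if s then 1 else -1) \<and> height p N + (if s then 1 else -1) \<le> int K"
  show "p@[s] \<in> bounded_paths (Suc N) K" unfolding bounded_paths_def
  proof (safe)
    show "length (p@[s]) = Suc N" using assms by simp
  next
    fix i assume i: "i \<le> Suc N"
    show "0 \<le> height (p @ [s]) i" "height (p @ [s]) i \<le> int K"
    proof -
      have "0 \<le> height (p @ [s]) i \<and> height (p @ [s]) i \<le> int K"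
      proof (cases "i = Suc N")
        case True
        then show ?thesis using height_snoc_end[of p s] assms h by simp
      next
        case False
        then have "i \<le> N" using i by simp
        then show ?thesis using height_snoc_le[of i p s] assms h by (simp add: bounded_paths_def)
      qed
      then show "0 \<le> height (p @ [s]) i" "height (p @ [s]) i \<le> int K" by auto
    qed
  qed
qed

definition S :: "nat \<Rightarrow> nat \<Rightarrow> nat \<Rightarrow> bool list set" where
  "S N K h = {ss \<in> bounded_paths N K. height ss N = int h}"

fun P :: "nat \<Rightarrow> nat \<Rightarrow> nat \<Rightarrow> nat" where
  "P K 0 h = (if h = 0 then 1 else 0)"
| "P K (Suc N) h = (if h \<le> K then (if h = 0 then 0 else P K N (h-1)) + P K N (h+1) else 0)"

lemma finite_bp: "finite (bounded_paths N K)"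
proof -
  have "bounded_paths N K \<subseteq> {xs. length xs = N}" by (auto simp: bounded_paths_def)
  moreover have "finite {xs::bool list. length xs = N}"
    using finite_lists_length_eq[of "UNIV::bool set"] by simp
  ultimately show ?thesis by (rule finite_subset)
qed

lemma finite_S: "finite (S N K h)" unfolding S_def using finite_bp by simp

lemma bp_length: "ss \<in> bounded_paths N K \<Longrightarrow> length ss = N" by (simp add: bounded_paths_def)

lemma S0: "S 0 K h = (if h = 0 then {[]} else {})"
  by (auto simp: S_def bounded_paths_def)

lemma S_Suc:
  "S (Suc N) K h = (if h \<le> K then ((\<lambda>p. p@[True]) ` (if h = 0 then {} else S N K (h-1)))
       \<union> ((\<lambda>p. p@[False]) ` S N K (h+1)) else {})"
proof (cases "h \<le> K")
  case False
  have "S (Suc N) K h = {}"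
  proof (rule ccontr)
    assume "S (Suc N) K h \<noteq> {}"
    then obtain ss where "ss \<in> bounded_paths (Suc N) K" "height ss (Suc N) = int h" unfolding S_def by auto
    then show False using False by (auto simp: bounded_paths_def)
  qed
  then show ?thesis using False by simp
next
  case True
  have H: "\<And>ss. ss \<in> S (Suc N) K h \<longleftrightarrow> ss \<in> (if h \<le> K then ((\<lambda>p. p@[True]) ` (if h = 0 then {} else S N K (h-1)))
       \<union> ((\<lambda>p. p@[False]) ` S N K (h+1)) else {})"
    proof -
    fix ss
    show "ss \<in> S (Suc N) K h \<longleftrightarrow> ss \<in> (if h \<le> K then ((\<lambda>p. p@[True]) ` (if h = 0 then {} else S N K (h-1)))
       \<union> ((\<lambda>p. p@[False]) ` S N K (h+1)) else {})"
    proof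
      assume a: "ss \<in> S (Suc N) K h"
      then have l: "length ss = Suc N" unfolding S_def by (auto dest: bp_length)
      then obtain p s where ps: "ss = p@[s]" and lp: "length p = N"
        by (metis length_Suc_conv_rev)
      have hb: "p \<in> bounded_paths N K" and he: "height p N + (if s then 1 else -1) = int h"
        using a bp_snoc[OF lp, of s K] height_snoc_end[of p s] lp unfolding S_def ps by auto
      show "ss \<in> (if h \<le> K then ((\<lambda>p. p@[True]) ` (if h = 0 then {} else S N K (h-1)))
       \<union> ((\<lambda>p. p@[False]) ` S N K (h+1)) else {})"
      proof (cases s)
        case True
        have "height p N \<ge> 0" using hb by (auto simp: bounded_paths_def)
        then have "h \<noteq> 0" "height p N = int (h-1)" using he True by auto
        then show ?thesis using \<open>h \<le> K\<close> True ps hb unfolding S_def by auto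
      next
        case False
        have "height p N = int (h+1)" using he False by auto
        then show ?thesis using \<open>h \<le> K\<close> False ps hb unfolding S_def by auto
      qed
    next
      assume a: "ss \<in> (if h \<le> K then ((\<lambda>p. p@[True]) ` (if h = 0 then {} else S N K (h-1)))
       \<union> ((\<lambda>p. p@[False]) ` S N K (h+1)) else {})"
      then obtain p s where ps: "ss = p@[s]" and pS: "p \<in> S N K (if s then h-1 else h+1)"
        and hs: "s \<Longrightarrow> h \<noteq> 0"
      proof -
        from a True have "(h \<noteq> 0 \<and> ss \<in> (\<lambda>p. p@[True]) ` S N K (h-1)) \<or> ss \<in> (\<lambda>p. p@[False]) ` S N K (h+1)"
          by (auto split: if_splits)
        then show thesis
        proof (elim disjE conjE imageE)
          fix p assume "h\<noteq>0" "ss = p@[True]" "p \<in> S N K (h-1)" with that[of p True] show thesis by simp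
        next
          fix p assume "ss = p@[False]" "p \<in> S N K (h+1)" with that[of p False] show thesis by simp
        qed
      qed
      have lp: "length p = N" using pS unfolding S_def by (auto dest: bp_length)
      have hp: "height p N = int (if s then h-1 else h+1)" "p \<in> bounded_paths N K"
        using pS unfolding S_def by auto
      have e: "height p N + (if s then 1 else -1) = int h" using hp hs by auto
      show "ss \<in> S (Suc N) K h" unfolding S_def ps
        using bp_snoc[OF lp, of s K] hp e height_snoc_end[of p s] lp \<open>h \<le> K\<close> by auto
    qed
  qed
  show ?thesis by (subst set_eq_iff, intro allI, rule H)
qed



lemma card_S: "card (S N K h) = P K N h"
proof (induction N arbitrary: h)
  case 0
  then show ?case by (simp add: S0)
next
  case (Suc N)
  show ?case
  proof (cases "h \<le> K")
    case False then show ?thesis by (simp add: S_Suc)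
  next
    case True
    have inj1: "inj_on (\<lambda>p. p@[True]) X" for X by (auto simp: inj_on_def)
    have inj2: "inj_on (\<lambda>p. p@[False]) X" for X by (auto simp: inj_on_def)
    have disj: "((\<lambda>p. p@[True]) ` (if h = 0 then {} else S N K (h-1))) \<inter> ((\<lambda>p. p@[False]) ` S N K (h+1)) = {}"
      by auto
    have "card (S (Suc N) K h) = card ((\<lambda>p. p@[True]) ` (if h = 0 then {} else S N K (h-1)))
        + card ((\<lambda>p. p@[False]) ` S N K (h+1))"
      unfolding S_Suc using True disj by (simp add: card_Un_disjoint finite_S)
    also have "\<dots> = (if h = 0 then 0 else P K N (h-1)) + P K N (h+1)"
      using card_image[OF inj1] card_image[OF inj2] Suc.IH by simp
    finally show ?thesis using True by simp
  qed
qed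

lemma P_out: "h > K \<Longrightarrow> P K N h = 0"
  by (cases N) auto

lemma a_sum: "a N K = int (\<Sum>h\<le>K. P K N h)"
proof -
  have "bounded_paths N K = (\<Union>h\<le>K. S N K h)"
  proof safe
    fix ss assume "ss \<in> bounded_paths N K"
    then have "0 \<le> height ss N" "height ss N \<le> int K" by (auto simp: bounded_paths_def)
    then show "ss \<in> (\<Union>h\<le>K. S N K h)" using \<open>ss \<in> bounded_paths N K\<close>
      unfolding S_def by (intro UN_I[of "nat (height ss N)"]) auto
  qed (auto simp: S_def)
  moreover have "card (\<Union>h\<le>K. S N K h) = (\<Sum>h\<le>K. card (S N K h))"
    by (rule card_UN_disjoint) (auto simp: finite_S, auto simp: S_def)
  ultimately have "card (bounded_paths N K) = (\<Sum>h\<le>K. card (S N K h))" by simp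
  then show ?thesis unfolding a_def by (simp add: card_S)
qed



lemma mult_entry:
  assumes "A \<in> carrier_mat n p" "B \<in> carrier_mat p q" "i < n" "j < q"
  shows "(A*B)$$(i,j) = (\<Sum>l<p. A$$(i,l) * B$$(l,j))"
  using assms by (auto simp: scalar_prod_def atLeast0LessThan intro: sum.cong)

lemma pow_Suc':
  assumes "A \<in> carrier_mat n n"
  shows "A ^\<^sub>m Suc k = A * A ^\<^sub>m k"
proof (induction k)
  case 0 then show ?case using assms by simp
next
  case (Suc k)
  have "A ^\<^sub>m Suc (Suc k) = (A * A ^\<^sub>m k) * A" using Suc by simp
  also have "\<dots> = A * (A ^\<^sub>m k * A)" using assms by (simp add: assoc_mult_mat[of _ n n _ n _ n])
  finally show ?case by simp
qed

lemma pow_add_mat: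
  assumes "A \<in> carrier_mat n n"
  shows "A ^\<^sub>m (x + y) = A ^\<^sub>m x * A ^\<^sub>m y"
proof (induction y)
  case 0 then show ?case using assms by simp
next
  case (Suc y)
  have "A ^\<^sub>m (x + Suc y) = (A ^\<^sub>m x * A ^\<^sub>m y) * A" using Suc by simp
  also have "\<dots> = A ^\<^sub>m x * (A ^\<^sub>m y * A)" using assms by (simp add: assoc_mult_mat[of _ n n _ n _ n])
  finally show ?case by simp
qed

lemma det_pow:
  assumes "A \<in> carrier_mat n n"
  shows "det (A ^\<^sub>m k) = det A ^ k"
proof (induction k)
  case 0 then show ?case using assms by simp
next
  case (Suc k)
  then show ?case using assms by (simp add: det_mult[of _ n])
qed

lemma sum_single:
  fixes n :: nat
  assumes "j < n" "\<And>l. l < n \<Longrightarrow> l \<noteq> j \<Longrightarrow> F l = 0"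
  shows "(\<Sum>l<n. F l) = (F j :: 'a :: comm_monoid_add)"
proof -
  have "(\<Sum>l<n. F l) = F j + (\<Sum>l\<in>{..<n} - {j}. F l)"
    using assms(1) by (intro sum.remove) auto
  also have "(\<Sum>l\<in>{..<n} - {j}. F l) = 0" using assms(2) by (intro sum.neutral) auto
  finally show ?thesis by simp
qed

definition band :: "(nat \<Rightarrow> nat \<Rightarrow> 'a::zero) \<Rightarrow> bool" where
  "band t \<longleftrightarrow> (\<forall>i j. i + 1 < j \<or> j + 1 < i \<longrightarrow> t i j = 0)"

lemma sum_tri_right_gen:
  assumes "band t"
  shows "(\<Sum>j<n. F j * t j l) = (if 0 < l \<and> l - 1 < n then F (l-1) * t (l-1) l else 0)
     + (if l < n then F l * t l l else 0) + (if l + 1 < n then F (l+1) * t (l+1) l else (0::'a::comm_ring_1))"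
proof (induction n)
  case 0 then show ?case by simp
next
  case (Suc n)
  have z: "t n l = 0" if "n + 1 < l \<or> l + 1 < n" using assms that unfolding band_def by blast
  have e: "(\<Sum>j<Suc n. F j * t j l) = (\<Sum>j<n. F j * t j l) + F n * t n l" by simp
  consider "n + 1 < l \<or> l + 1 < n" | "n + 1 = l" | "n = l" | "n = l + 1" by linarith
  then show ?case
  proof cases
    case 1
    then show ?thesis using e Suc.IH z[OF 1] by auto
  next
    case 2
    then show ?thesis using e Suc.IH by auto
  next
    case 3
    then show ?thesis using e Suc.IH by auto
  next
    case 4
    then show ?thesis using e Suc.IH by auto
  qed
qed

lemma sum_tri_left_gen:
  assumes "band t"
  shows "(\<Sum>j<n. t l j * F j) = (if 0 < l \<and> l - 1 < n then t l (l-1) * F (l-1) else 0)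
     + (if l < n then t l l * F l else 0) + (if l + 1 < n then t l (l+1) * F (l+1) else (0::'a::comm_ring_1))"
proof -
  have b: "band (\<lambda>i j. t j i)" using assms unfolding band_def by blast
  show ?thesis using sum_tri_right_gen[OF b, where n=n and F=F and l=l] by (simp add: mult.commute, arith)
qed



definition tB :: "nat \<Rightarrow> nat \<Rightarrow> nat \<Rightarrow> int" where
  "tB M i j = (if i = j+1 \<or> j = i+1 then 1 else 0) + (if i = j \<and> i = 0 then 1 else 0)
     - (if i = j \<and> i = M then 1 else 0)"

definition Bm :: "nat \<Rightarrow> int mat" where
  "Bm M = mat (Suc M) (Suc M) (\<lambda>(i,j). tB M i j)"

lemma band_tB: "band (tB M)" unfolding band_def tB_def by auto

lemma Bm_carrier: "Bm M \<in> carrier_mat (Suc M) (Suc M)" unfolding Bm_def by simp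

definition g :: "nat \<Rightarrow> nat \<Rightarrow> nat \<Rightarrow> int" where
  "g K N j = (\<Sum>h=j..K-j. int (P K N h))"

lemma sum_interval:
  fixes f :: "nat \<Rightarrow> int"
  assumes "x \<le> Suc y"
  shows "(\<Sum>h=x..y. f h) = (\<Sum>h<Suc y. f h) - (\<Sum>h<x. f h)"
proof -
  have "{..<Suc y} = {..<x} \<union> {x..y}" using assms by auto
  moreover have "sum f ({..<x} \<union> {x..y}) = sum f {..<x} + sum f {x..y}"
    by (rule sum.union_disjoint) auto
  ultimately have "(\<Sum>h<Suc y. f h) = (\<Sum>h<x. f h) + (\<Sum>h=x..y. f h)" by simp
  then show ?thesis by simp
qed

lemma g_Suc:
  assumes K: "K = 2*M" and M: "1 \<le> M" and j: "j \<le> M"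
  shows "g K (Suc N) j = (if j = 0 then g K N 0 + g K N 1 else if j = M then g K N (M-1) - g K N M
     else g K N (j-1) + g K N (j+1))"
proof -
  define Fs where "Fs x = (\<Sum>h<x. int (P K N h))" for x
  have gF: "g K N i = Fs (K - i + 1) - Fs i" if "i \<le> M" for i
    unfolding g_def Fs_def using that K by (subst sum_interval) auto
  have PK: "P K N (K+1) = 0" by (rule P_out) simp
  have FsK2: "Fs (K+2) = Fs (K+1)" unfolding Fs_def using PK by (simp add: numeral_2_eq_2)
  have split: "g K (Suc N) j = (\<Sum>h=j..K-j. int (if h = 0 then 0 else P K N (h-1)))
       + (\<Sum>h=j..K-j. int (P K N (h+1)))"
    unfolding g_def sum.distrib[symmetric]
    by (rule sum.cong) (use K j in auto)
  have second: "(\<Sum>h=j..K-j. int (P K N (h+1))) = Fs (K - j + 2) - Fs (j+1)"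
  proof -
    have "(\<Sum>h=j..K-j. int (P K N (h+1))) = (\<Sum>h=Suc j..Suc (K-j). int (P K N h))"
      by (subst sum.shift_bounds_cl_Suc_ivl) simp
    also have "\<dots> = Fs (K - j + 2) - Fs (j+1)" unfolding Fs_def
      using K j by (subst sum_interval) (auto simp: numeral_2_eq_2)
    finally show ?thesis .
  qed
  have first: "(\<Sum>h=j..K-j. int (if h = 0 then 0 else P K N (h-1))) =
      (if j = 0 then Fs K else Fs (K - j) - Fs (j - 1))"
  proof (cases "j = 0")
    case True
    have "(\<Sum>h=0..K. int (if h = 0 then 0 else P K N (h-1))) =
          int (if 0 = (0::nat) then 0 else P K N (0-1)) + (\<Sum>h=Suc 0..K. int (if h = 0 then 0 else P K N (h-1)))"
      by (rule sum.atLeast_Suc_atMost) simp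
    also have "(\<Sum>h=Suc 0..K. int (if h = 0 then 0 else P K N (h-1))) = (\<Sum>h=Suc 0..Suc (K-1). int (if h = 0 then 0 else P K N (h-1)))"
      using K M by simp
    also have "\<dots> = (\<Sum>h=0..K-1. int (P K N h))" by (subst sum.shift_bounds_cl_Suc_ivl) simp
    also have "\<dots> = Fs K" unfolding Fs_def using K M by (subst sum_interval) auto
    finally show ?thesis using True by simp
  next
    case False
    have "(\<Sum>h=j..K-j. int (if h = 0 then 0 else P K N (h-1))) =
        (\<Sum>h=Suc (j-1)..Suc (K-j-1). int (if h = 0 then 0 else P K N (h-1)))"
      using False K j M by (intro sum.cong) auto
    also have "\<dots> = (\<Sum>h=j-1..K-j-1. int (P K N h))" by (subst sum.shift_bounds_cl_Suc_ivl) simp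
    also have "\<dots> = Fs (K - j) - Fs (j - 1)"
    proof -
      have e: "Suc (K-j-1) = K - j" using K j M False by simp
      have "(\<Sum>h=j-1..K-j-1. int (P K N h)) = (\<Sum>h<Suc (K-j-1). int (P K N h)) - (\<Sum>h<j-1. int (P K N h))"
        by (rule sum_interval) (use K j M False in auto)
      then show ?thesis unfolding Fs_def e .
    qed
    finally show ?thesis using False by simp
  qed
  show ?thesis
  proof -
    consider "j = 0" | "j = M" "j \<noteq> 0" | "j \<noteq> 0" "j \<noteq> M" by blast
    then show ?thesis
    proof cases
      case 1
      then show ?thesis using split first second gF[of 0] gF[of 1] M K FsK2 by (simp add: Fs_def)
    next
      case 2
      have a1: "K - (M - 1) + 1 = M + 2" using K M by simp
      have a2: "K - M + 1 = M + 1" using K by simp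
      have a3: "K - j + 2 = M + 2" "K - j = M" "j - 1 = M - 1" "j + 1 = M + 1" using K 2 by auto
      show ?thesis using 2 split first second gF[of "M-1"] gF[of M] a1 a2 a3 by simp
    next
      case 3
      have a1: "K - (j - 1) + 1 = K - j + 2" "K - (j+1) + 1 = K - j" using K j 3 by auto
      have "j - 1 \<le> M" using j by simp
      then show ?thesis using 3 split first second gF[of "j-1"] gF[of "j+1"] a1 j by simp
    qed
  qed
qed

lemma Bm_pow_col:
  assumes M: "1 \<le> M" and j: "j \<le> M"
  shows "(Bm M ^\<^sub>m N) $$ (j, 0) = g (2*M) N j"
  using j
proof (induction N arbitrary: j)
  case 0
  have "g (2*M) 0 j = (\<Sum>h=j..2*M-j. (if h = 0 then 1 else 0))"
    unfolding g_def by (intro sum.cong) auto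
  also have "\<dots> = (if j = 0 then 1 else 0)" by (subst sum.delta) auto
  finally show ?case using 0 Bm_carrier[of M] by simp
next
  case (Suc N)
  have "(Bm M ^\<^sub>m Suc N) $$ (j, 0) = (Bm M * Bm M ^\<^sub>m N) $$ (j, 0)"
    using pow_Suc'[OF Bm_carrier] by simp
  also have "\<dots> = (\<Sum>l<Suc M. Bm M $$ (j,l) * (Bm M ^\<^sub>m N) $$ (l, 0))"
    using Suc.prems by (intro mult_entry[OF Bm_carrier pow_carrier_mat[OF Bm_carrier]]) auto
  also have "\<dots> = (\<Sum>l<Suc M. tB M j l * g (2*M) N l)"
    using Suc.prems Suc.IH unfolding Bm_def by (intro sum.cong) auto
  also have "\<dots> = g (2*M) (Suc N) j"
    using Suc.prems M by (subst sum_tri_left_gen[OF band_tB], subst g_Suc[OF refl M Suc.prems])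
      (auto simp: tB_def)
  finally show ?case .
qed

lemma a_Bm:
  assumes "1 \<le> M"
  shows "a N (2*M) = (Bm M ^\<^sub>m N) $$ (0, 0)"
proof -
  have "a N (2*M) = g (2*M) N 0" unfolding a_sum g_def
    by (simp add: atMost_atLeast0 of_nat_sum)
  then show ?thesis using Bm_pow_col[OF assms, of 0] by simp
qed



lemma neg1_odd: "(-1::int) ^ (m + Suc m) = -1"
  by (induct m) auto
lemma neg1_even: "(-1::int) ^ (m + m) = 1"
  by (induct m) auto

lemma det_tri_step:
  fixes t :: "nat \<Rightarrow> nat \<Rightarrow> int"
  assumes b: "band t"
  shows "det (mat (m+2) (m+2) (\<lambda>(i,j). t i j)) = t (m+1) (m+1) * det (mat (m+1) (m+1) (\<lambda>(i,j). t i j))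
     - t m (m+1) * t (m+1) m * det (mat m m (\<lambda>(i,j). t i j))"
proof -
  define A where "A = mat (m+2) (m+2) (\<lambda>(i,j). t i j)"
  have A: "A \<in> carrier_mat (m+2) (m+2)" unfolding A_def by simp
  have md: "mat_delete A (m+1) (m+1) = mat (m+1) (m+1) (\<lambda>(i,j). t i j)"
    unfolding A_def mat_delete_def by (rule eq_matI) auto
  have cf1: "cofactor A (m+1) (m+1) = det (mat (m+1) (m+1) (\<lambda>(i,j). t i j))"
    unfolding cofactor_def
    using md neg1_even[of "m+1"] by simp
  have "det A = (\<Sum>i<m+2. A $$ (i,m+1) * cofactor A i (m+1))"
    by (rule laplace_expansion_column[OF A]) simp
  also have "\<dots> = (\<Sum>i<m. A $$ (i,m+1) * cofactor A i (m+1)) + A $$ (m,m+1) * cofactor A m (m+1)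
      + A $$ (m+1,m+1) * cofactor A (m+1) (m+1)"
    by (simp add: numeral_2_eq_2)
  also have "(\<Sum>i<m. A $$ (i,m+1) * cofactor A i (m+1)) = 0"
  proof (intro sum.neutral ballI)
    fix i assume "i \<in> {..<m}"
    then have "t i (m+1) = 0" using b unfolding band_def by auto
    then show "A $$ (i,m+1) * cofactor A i (m+1) = 0" unfolding A_def using \<open>i \<in> {..<m}\<close> by simp
  qed
  also have "cofactor A (m+1) (m+1) = det (mat (m+1) (m+1) (\<lambda>(i,j). t i j))" by (rule cf1)
  also have "cofactor A m (m+1) = - (t (m+1) m * det (mat m m (\<lambda>(i,j). t i j)))"
  proof -
    define M' where "M' = mat_delete A m (m+1)"
    have M': "M' \<in> carrier_mat (m+1) (m+1)" unfolding M'_def using mat_delete_carrier[OF A] by simp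
    have "det M' = (\<Sum>j<m+1. M' $$ (m,j) * cofactor M' m j)"
      by (rule laplace_expansion_row[OF M']) simp
    also have "\<dots> = (\<Sum>j<m. M' $$ (m,j) * cofactor M' m j) + M' $$ (m,m) * cofactor M' m m" by simp
    also have "(\<Sum>j<m. M' $$ (m,j) * cofactor M' m j) = 0"
    proof (intro sum.neutral ballI)
      fix j assume "j \<in> {..<m}"
      then have "t (m+1) j = 0" using b unfolding band_def by auto
      then show "M' $$ (m,j) * cofactor M' m j = 0" unfolding M'_def A_def mat_delete_def
        using \<open>j \<in> {..<m}\<close> by simp
    qed
    also have "M' $$ (m,m) = t (m+1) m" unfolding M'_def A_def mat_delete_def by simp
    also have "mat_delete M' m m = mat m m (\<lambda>(i,j). t i j)"
      unfolding M'_def A_def mat_delete_def by (rule eq_matI) auto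
    then have "cofactor M' m m = det (mat m m (\<lambda>(i,j). t i j))"
      unfolding cofactor_def using neg1_even[of m] by simp
    finally have "det M' = t (m+1) m * det (mat m m (\<lambda>(i,j). t i j))" by simp
    then show ?thesis unfolding cofactor_def M'_def[symmetric] using neg1_odd[of m]
      by (simp add: add.commute)
  qed
  finally show ?thesis unfolding A_def by (simp add: algebra_simps)
qed

lemma hankel:
  fixes C :: "int mat" and \<mu> :: int
  assumes C: "C \<in> carrier_mat m m"
    and up: "\<And>i j. i < m \<Longrightarrow> j < m \<Longrightarrow> i + 1 < j \<Longrightarrow> C$$(i,j) = 0"
    and lo: "\<And>i j. i < m \<Longrightarrow> j < m \<Longrightarrow> j + 1 < i \<Longrightarrow> C$$(i,j) = 0"
    and sup: "\<And>i. i + 1 < m \<Longrightarrow> C$$(i,i+1) = 1"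
    and sub: "\<And>i. i + 1 < m \<Longrightarrow> C$$(i+1,i) = \<mu>"
  shows "det (mat m m (\<lambda>(i,j). (C ^\<^sub>m (n+i+j))$$(0,0))) = (\<Prod>j<m. \<mu>^j) * det C ^ n"
proof (cases "m = 0")
  case True
  then show ?thesis using C by simp
next
  case False
  then have m0: "0 < m" by simp
  have Cp: "C ^\<^sub>m k \<in> carrier_mat m m" for k using C by simp
  have col: "(C ^\<^sub>m j) $$ (h,0) = (if h = j then \<mu>^j else 0)" if "j < m" "h < m" "j \<le> h" for j h
    using that
  proof (induction j arbitrary: h)
    case 0
    then show ?case using C m0 by simp
  next
    case (Suc j)
    have e: "(C ^\<^sub>m Suc j) $$ (h,0) = (\<Sum>l<m. C $$ (h,l) * (C ^\<^sub>m j) $$ (l,0))"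
      using pow_Suc'[OF C] mult_entry[OF C Cp] Suc.prems m0 by simp
    show ?case
    proof (cases "h = Suc j")
      case True
      have "(\<Sum>l<m. C $$ (h,l) * (C ^\<^sub>m j) $$ (l,0)) = C $$ (h,j) * (C ^\<^sub>m j) $$ (j,0)"
      proof (rule sum_single)
        show "j < m" using Suc.prems by simp
        fix l assume l: "l < m" "l \<noteq> j"
        show "C $$ (h,l) * (C ^\<^sub>m j) $$ (l,0) = 0"
        proof (cases "l < j")
          case True then show ?thesis using lo[of h l] \<open>h = Suc j\<close> l Suc.prems by simp
        next
          case False then show ?thesis using Suc.IH[of l] l by simp
        qed
      qed
      then show ?thesis using e True sub[of j] Suc.prems Suc.IH[of j] by simp
    next
      case False
      have "(\<Sum>l<m. C $$ (h,l) * (C ^\<^sub>m j) $$ (l,0)) = 0"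
      proof (intro sum.neutral ballI)
        fix l assume l: "l \<in> {..<m}"
        show "C $$ (h,l) * (C ^\<^sub>m j) $$ (l,0) = 0"
        proof (cases "j \<le> l")
          case False then show ?thesis using lo[of h l] \<open>h \<noteq> Suc j\<close> l Suc.prems by simp
        next
          case True
          show ?thesis
          proof (cases "l = j")
            case True
            have "C $$ (h,l) = 0" by (rule lo) (use l Suc.prems \<open>h \<noteq> Suc j\<close> True in auto)
            then show ?thesis by simp
          next
            case False
            then show ?thesis using Suc.IH[of l] l Suc.prems \<open>j \<le> l\<close> by simp
          qed
        qed
      qed
      then show ?thesis using e False by simp
    qed
  qed
  have row: "(C ^\<^sub>m i) $$ (0,h) = (if h = i then 1 else 0)" if "i < m" "h < m" "i \<le> h" for i h
    using that
  proof (induction i arbitrary: h)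
    case 0
    then show ?case using C m0 by simp
  next
    case (Suc i)
    have e: "(C ^\<^sub>m Suc i) $$ (0,h) = (\<Sum>l<m. (C ^\<^sub>m i) $$ (0,l) * C $$ (l,h))"
      using mult_entry[OF Cp C] Suc.prems m0 by simp
    show ?case
    proof (cases "h = Suc i")
      case True
      have "(\<Sum>l<m. (C ^\<^sub>m i) $$ (0,l) * C $$ (l,h)) = (C ^\<^sub>m i) $$ (0,i) * C $$ (i,h)"
      proof (rule sum_single)
        show "i < m" using Suc.prems by simp
        fix l assume l: "l < m" "l \<noteq> i"
        show "(C ^\<^sub>m i) $$ (0,l) * C $$ (l,h) = 0"
        proof (cases "l < i")
          case True then show ?thesis using up[of l h] \<open>h = Suc i\<close> l Suc.prems by simp
        next
          case False then show ?thesis using Suc.IH[of l] l by simp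
        qed
      qed
      then show ?thesis using e True sup[of i] Suc.prems Suc.IH[of i] by simp
    next
      case False
      have "(\<Sum>l<m. (C ^\<^sub>m i) $$ (0,l) * C $$ (l,h)) = 0"
      proof (intro sum.neutral ballI)
        fix l assume l: "l \<in> {..<m}"
        show "(C ^\<^sub>m i) $$ (0,l) * C $$ (l,h) = 0"
        proof (cases "i \<le> l")
          case False then show ?thesis using up[of l h] \<open>h \<noteq> Suc i\<close> l Suc.prems by simp
        next
          case True
          show ?thesis
          proof (cases "l = i")
            case True
            have "C $$ (l,h) = 0" by (rule up) (use l Suc.prems \<open>h \<noteq> Suc i\<close> True in auto)
            then show ?thesis by simp
          next
            case False
            then show ?thesis using Suc.IH[of l] l Suc.prems \<open>i \<le> l\<close> by simp
          qed
        qed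
      qed
      then show ?thesis using e False by simp
    qed
  qed
  define R where "R = mat m m (\<lambda>(i,h). (C ^\<^sub>m i) $$ (0,h))"
  define Q where "Q = mat m m (\<lambda>(h,j). (C ^\<^sub>m j) $$ (h,0))"
  have R: "R \<in> carrier_mat m m" and Q: "Q \<in> carrier_mat m m" unfolding R_def Q_def by auto
  have RC: "(R * C ^\<^sub>m n) $$ (i,h') = (C ^\<^sub>m (i+n)) $$ (0,h')" if "i < m" "h' < m" for i h'
  proof -
    have "(R * C ^\<^sub>m n) $$ (i,h') = (\<Sum>h<m. R $$ (i,h) * (C ^\<^sub>m n) $$ (h,h'))"
      using mult_entry[OF R Cp] that by simp
    also have "\<dots> = (\<Sum>h<m. (C ^\<^sub>m i) $$ (0,h) * (C ^\<^sub>m n) $$ (h,h'))"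
      unfolding R_def using that by (intro sum.cong) auto
    also have "\<dots> = (C ^\<^sub>m i * C ^\<^sub>m n) $$ (0,h')"
      using mult_entry[OF Cp Cp] that m0 by simp
    finally show ?thesis using pow_add_mat[OF C] by simp
  qed
  have HM: "mat m m (\<lambda>(i,j). (C ^\<^sub>m (n+i+j))$$(0,0)) = R * C ^\<^sub>m n * Q"
  proof (rule eq_matI)
    fix i j assume ij: "i < dim_row (R * C ^\<^sub>m n * Q)" "j < dim_col (R * C ^\<^sub>m n * Q)"
    then have i: "i < m" and j: "j < m" using R Q by auto
    have RCc: "R * C ^\<^sub>m n \<in> carrier_mat m m" using R Cp by auto
    have "(R * C ^\<^sub>m n * Q) $$ (i,j) = (\<Sum>h<m. (R * C ^\<^sub>m n) $$ (i,h) * Q $$ (h,j))"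
      using mult_entry[OF RCc Q] i j by simp
    also have "\<dots> = (\<Sum>h<m. (C ^\<^sub>m (i+n)) $$ (0,h) * (C ^\<^sub>m j) $$ (h,0))"
      unfolding Q_def using i j RC by (intro sum.cong) auto
    also have "\<dots> = (C ^\<^sub>m (i+n) * C ^\<^sub>m j) $$ (0,0)"
      using mult_entry[OF Cp Cp] m0 by simp
    also have "\<dots> = (C ^\<^sub>m (n+i+j)) $$ (0,0)"
      using pow_add_mat[OF C, of "i+n" j] by (simp add: add.commute add.left_commute)
    finally show "mat m m (\<lambda>(i,j). (C ^\<^sub>m (n+i+j))$$(0,0)) $$ (i,j) = (R * C ^\<^sub>m n * Q) $$ (i,j)"
      using i j by simp
  qed (use R Q in auto)
  have dR: "det R = 1"
  proof -
    have "det R = prod_list (diag_mat R)"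
      by (rule det_lower_triangular[OF _ R]) (auto simp: R_def row)
    also have "\<dots> = (\<Prod>i = 0..<m. R $$ (i,i))" using R by (simp add: prod_list_diag_prod)
    also have "\<dots> = 1" by (intro prod.neutral) (auto simp: R_def row)
    finally show ?thesis .
  qed
  have dQ: "det Q = (\<Prod>j<m. \<mu>^j)"
  proof -
    have ut: "upper_triangular Q" unfolding upper_triangular_def Q_def using col by auto
    have "det Q = prod_list (diag_mat Q)"
      by (rule det_upper_triangular[OF ut Q])
    also have "\<dots> = (\<Prod>i = 0..<m. Q $$ (i,i))" using Q by (simp add: prod_list_diag_prod)
    also have "\<dots> = (\<Prod>j<m. \<mu>^j)" unfolding atLeast0LessThan
      by (intro prod.cong) (auto simp: Q_def col)
    finally show ?thesis .
  qed
  have "det (R * C ^\<^sub>m n * Q) = det R * det (C ^\<^sub>m n) * det Q"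
    using det_mult[OF R Cp] det_mult[OF _ Q, of "R * C ^\<^sub>m n"] R Cp by auto
  then show ?thesis unfolding HM using dR dQ det_pow[OF C] by simp
qed



definition t0 :: "nat \<Rightarrow> nat \<Rightarrow> int" where
  "t0 i j = (if i = j+1 \<or> j = i+1 then 1 else 0) + (if i = j \<and> i = 0 then 1 else 0)"

lemma band_t0: "band t0" unfolding band_def t0_def by auto

lemma D0: "det (mat j j (\<lambda>(i,l). t0 i l)) = (-1) ^ (j div 2)"
proof -
  have "det (mat j j (\<lambda>(i,l). t0 i l)) = (-1) ^ (j div 2) \<and>
        det (mat (Suc j) (Suc j) (\<lambda>(i,l). t0 i l)) = (-1) ^ (Suc j div 2)"
  proof (induction j)
    case 0
    have "det (mat 1 1 (\<lambda>(i,l). t0 i l)) = 1"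
      by (subst det_single) (auto simp: t0_def)
    then show ?case by simp
  next
    case (Suc j)
    have "det (mat (j+2) (j+2) (\<lambda>(i,l). t0 i l)) = - det (mat j j (\<lambda>(i,l). t0 i l))"
      by (subst det_tri_step[OF band_t0]) (simp add: t0_def)
    moreover have "j + 2 = Suc (Suc j)" by simp
    moreover have "(-1::int)^(Suc (Suc j) div 2) = - ((-1)^(j div 2))" by simp
    ultimately have "det (mat (Suc (Suc j)) (Suc (Suc j)) (\<lambda>(i,l). t0 i l)) = (-1) ^ (Suc (Suc j) div 2)"
      using Suc.IH by metis
    then show ?case using Suc.IH by simp
  qed
  then show ?thesis by simp
qed

lemma det_Bm:
  assumes k: "1 \<le> k"
  shows "det (Bm (2*k-1)) = (-1)^k * 2"
proof -
  define M where "M = 2*k-1"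
  have SM: "Suc M = (2*k-2) + 2" "2*k-2+1 = M" using k unfolding M_def by auto
  have sub: "mat j j (\<lambda>(i,l). tB M i l) = mat j j (\<lambda>(i,l). t0 i l)" if "j \<le> M" for j
    using that by (intro eq_matI) (auto simp: tB_def t0_def)
  have "det (Bm M) = det (mat ((2*k-2)+2) ((2*k-2)+2) (\<lambda>(i,l). tB M i l))"
    unfolding Bm_def SM(1) ..
  also have "\<dots> = tB M M M * det (mat M M (\<lambda>(i,l). tB M i l)) - tB M (2*k-2) M * tB M M (2*k-2) * det (mat (2*k-2) (2*k-2) (\<lambda>(i,l). tB M i l))"
    by (subst det_tri_step[OF band_tB]) (simp only: SM(2))
  also have "\<dots> = - det (mat M M (\<lambda>(i,l). t0 i l)) - det (mat (2*k-2) (2*k-2) (\<lambda>(i,l). t0 i l))"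
    using sub[of M] sub[of "2*k-2"] k unfolding M_def by (auto simp: tB_def)
  also have "\<dots> = -((-1)^(M div 2)) - (-1)^((2*k-2) div 2)" by (simp add: D0)
  finally have dd: "det (Bm M) = -((-1)^(M div 2)) - (-1)^((2*k-2) div 2)" .
  have "M div 2 = k - 1" "(2*k-2) div 2 = k - 1" unfolding M_def using k by auto
  then have "det (Bm M) = - 2 * (-1)^(k-1)" using dd by simp
  also have "\<dots> = (-1)^k * 2" using k by (cases k) auto
  finally show ?thesis unfolding M_def .
qed

lemma case2:
  assumes k: "1 \<le> k"
  shows "det (mat (2*k) (2*k) (\<lambda>(i,j). a (n+i+j) (4*k-2))) = (-1) ^ (k*n) * 2 ^ n"
proof -
  define M where "M = 2*k-1"
  have M1: "1 \<le> M" and SM: "Suc M = 2*k" and KM: "4*k-2 = 2*M" using k unfolding M_def by auto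
  have "mat (2*k) (2*k) (\<lambda>(i,j). a (n+i+j) (4*k-2)) = mat (2*k) (2*k) (\<lambda>(i,j). (Bm M ^\<^sub>m (n+i+j)) $$ (0,0))"
    unfolding KM using a_Bm[OF M1] by auto
  also have "det \<dots> = (\<Prod>j<2*k. 1^j) * det (Bm M) ^ n"
  proof (rule hankel)
    show "Bm M \<in> carrier_mat (2*k) (2*k)" using Bm_carrier SM by metis
  qed (auto simp: Bm_def SM[symmetric] tB_def)
  also have "\<dots> = ((-1)^k * 2) ^ n" using det_Bm[OF k] unfolding M_def by simp
  also have "\<dots> = (-1) ^ (k*n) * 2 ^ n" by (simp add: power_mult_distrib power_mult)
  finally show ?thesis .
qed



definition eps :: "nat \<Rightarrow> int" where
  "eps j = (if j mod 4 = 1 \<or> j mod 4 = 2 then -1 else 1)"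

lemma eps_Suc: "eps (Suc j) = (if even j then - eps j else eps j)"
  unfolding eps_def by (auto simp: even_iff_mod_2_eq_zero; presburger)

lemma eps_SS: "eps (Suc (Suc j)) = - eps j"
  using eps_Suc[of j] eps_Suc[of "Suc j"] by auto

lemma eps_sq: "eps j * eps j = 1" unfolding eps_def by auto

lemma eps_0: "eps 0 = 1" and eps_1: "eps 1 = -1" and eps_1': "eps (Suc 0) = -1" unfolding eps_def by auto

definition tC :: "nat \<Rightarrow> nat \<Rightarrow> int" where
  "tC i j = (if j = i+1 then 1 else if i = j+1 then -1 else if i = j then (if even i then 2 else -2) else 0)"

definition tT :: "nat \<Rightarrow> nat \<Rightarrow> int" where
  "tT h j = (if j \<le> h then eps h * eps j else 0)"

lemma band_tC: "band tC" unfolding band_def tC_def by auto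

lemma key:
  assumes hl: "h < K2" "l \<le> K2"
  shows "(if 0 < l then tT h (l-1) else 0) + (if l = 0 then tT h l else 0) - (if l = K2 then tT h l else 0)
     + (if l < K2 then tT h (l+1) else 0)
   = (if 0 < h then - tT (h-1) l else 0) + (if even h then 2 else -2) * tT h l + tT (h+1) l"
proof -
  consider "l + 1 \<le> h" | "l = h" | "l = h + 1" | "h + 2 \<le> l" by linarith
  then show ?thesis
  proof cases
    case 1
    then obtain h' where h': "h = Suc h'" by (cases h) auto
    have X: "- eps h' + (if even h then 2 else -2) * eps h + eps (Suc h) = 0"
      using h' eps_Suc[of h'] eps_Suc[of h] by auto
    have L: "(if 0 < l then tT h (l-1) else 0) + (if l = 0 then tT h l else 0) - (if l = K2 then tT h l else 0)
     + (if l < K2 then tT h (l+1) else 0) = 0"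
    proof (cases l)
      case 0
      then show ?thesis using 1 hl by (simp add: tT_def eps_0 eps_1 eps_1')
    next
      case (Suc l')
      then show ?thesis using 1 hl eps_SS[of l'] by (simp add: tT_def algebra_simps)
    qed
    have "(if 0 < h then - tT (h-1) l else 0) + (if even h then 2 else -2) * tT h l + tT (h+1) l
        = eps l * (- eps h' + (if even h then 2 else -2) * eps h + eps (Suc h))"
      using 1 h' by (simp add: tT_def algebra_simps)
    then show ?thesis using L X by simp
  next
    case 2
    show ?thesis
    proof (cases h)
      case 0
      then show ?thesis using 2 hl by (simp add: tT_def eps_0 eps_1 eps_1')
    next
      case (Suc h')
      have "eps (Suc h') = (if even h' then - eps h' else eps h')" by (rule eps_Suc)
      moreover have "eps (Suc (Suc h')) = (if even (Suc h') then - eps (Suc h') else eps (Suc h'))" by (rule eps_Suc)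
      ultimately show ?thesis using 2 Suc hl eps_sq[of h'] eps_sq[of "Suc h'"]
        by (auto simp: tT_def algebra_simps)
    qed
  next
    case 3
    then show ?thesis using hl eps_sq[of h] eps_sq[of "Suc h"] by (auto simp: tT_def)
  next
    case 4
    then show ?thesis using hl by (auto simp: tT_def)
  qed
qed

definition Tm :: "nat \<Rightarrow> int mat" where "Tm k = mat (2*k) (Suc (2*k)) (\<lambda>(h,j). tT h j)"
definition Cm :: "nat \<Rightarrow> int mat" where "Cm k = mat (2*k) (2*k) (\<lambda>(i,j). tC i j)"
definition Em :: "nat \<Rightarrow> int mat" where
  "Em k = mat (2*k) (Suc (2*k)) (\<lambda>(h,j). if h = 2*k-1 then tT (2*k) j else 0)"

lemma Tm_carrier: "Tm k \<in> carrier_mat (2*k) (Suc (2*k))" unfolding Tm_def by simp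
lemma Cm_carrier: "Cm k \<in> carrier_mat (2*k) (2*k)" unfolding Cm_def by simp
lemma Em_carrier: "Em k \<in> carrier_mat (2*k) (Suc (2*k))" unfolding Em_def by simp

lemma claim1:
  assumes k: "1 \<le> k"
  shows "Tm k * Bm (2*k) = Cm k * Tm k + Em k"
proof (rule eq_matI)
  fix h l assume "h < dim_row (Cm k * Tm k + Em k)" "l < dim_col (Cm k * Tm k + Em k)"
  then have h: "h < 2*k" and l: "l < Suc (2*k)" by (auto simp: Cm_def Em_def)
  have "(Tm k * Bm (2*k)) $$ (h,l) = (\<Sum>j<Suc (2*k). tT h j * tB (2*k) j l)"
    using mult_entry[OF Tm_carrier Bm_carrier] h l by (simp add: Tm_def Bm_def)
  also have "\<dots> = (if 0 < l then tT h (l-1) else 0) + (if l = 0 then tT h l else 0) - (if l = 2*k then tT h l else 0)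
     + (if l < 2*k then tT h (l+1) else 0)"
    using l k by (subst sum_tri_right_gen[OF band_tB]) (auto simp: tB_def)
  also have "\<dots> = (if 0 < h then - tT (h-1) l else 0) + (if even h then 2 else -2) * tT h l + tT (h+1) l"
    by (rule key) (use h l in auto)
  also have "\<dots> = (Cm k * Tm k + Em k) $$ (h,l)"
  proof -
    have "(Cm k * Tm k) $$ (h,l) = (\<Sum>j<2*k. tC h j * tT j l)"
      using mult_entry[OF Cm_carrier Tm_carrier] h l by (simp add: Tm_def Cm_def)
    also have "\<dots> = (if 0 < h then - tT (h-1) l else 0) + (if even h then 2 else -2) * tT h l
        + (if h + 1 < 2*k then tT (h+1) l else 0)"
      using h by (subst sum_tri_left_gen[OF band_tC]) (auto simp: tC_def)
    finally have e: "(Cm k * Tm k) $$ (h,l) = \<dots>" .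
    have "(Cm k * Tm k + Em k) $$ (h,l) = (Cm k * Tm k) $$ (h,l) + Em k $$ (h,l)"
      using h l by (subst index_add_mat) (auto simp: Em_def)
    also have "Em k $$ (h,l) = (if h = 2*k-1 then tT (2*k) l else 0)" using h l by (simp add: Em_def)
    finally show ?thesis using e h by (cases "h + 1 < 2*k") auto
  qed
  finally show "(Tm k * Bm (2*k)) $$ (h,l) = (Cm k * Tm k + Em k) $$ (h,l)" .
qed (auto simp: Tm_def Bm_def Cm_def Em_def)

lemma claim2:
  shows "Em k * Bm (2*k) = 0\<^sub>m (2*k) (Suc (2*k))"
proof (rule eq_matI)
  fix h l assume "h < dim_row (0\<^sub>m (2*k) (Suc (2*k)) :: int mat)" "l < dim_col (0\<^sub>m (2*k) (Suc (2*k)) :: int mat)"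
  then have h: "h < 2*k" and l: "l < Suc (2*k)" by auto
  have "(Em k * Bm (2*k)) $$ (h,l) = (\<Sum>j<Suc (2*k). (if h = 2*k-1 then tT (2*k) j else 0) * tB (2*k) j l)"
    using mult_entry[OF Em_carrier Bm_carrier] h l by (simp add: Em_def Bm_def)
  also have "\<dots> = 0"
  proof (cases "h = 2*k-1")
    case False then show ?thesis by simp
  next
    case True
    have "(\<Sum>j<Suc (2*k). (if h = 2*k-1 then tT (2*k) j else 0) * tB (2*k) j l) =
       (\<Sum>j<Suc (2*k). tT (2*k) j * tB (2*k) j l)" using True by simp
    also have "\<dots> = (if 0 < l then tT (2*k) (l-1) else 0) + (if l = 0 then tT (2*k) l else 0) - (if l = 2*k then tT (2*k) l else 0)
     + (if l < 2*k then tT (2*k) (l+1) else 0)"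
      using l h by (subst sum_tri_right_gen[OF band_tB]) (auto simp: tB_def)
    also have "\<dots> = 0"
    proof -
      consider "l = 0" | "0 < l" "l < 2*k" | "l = 2*k" using l by linarith
      then show ?thesis
      proof cases
        case 1 then show ?thesis using h by (simp add: tT_def eps_0 eps_1')
      next
        case 2
        then obtain l' where "l = Suc l'" by (cases l) auto
        then show ?thesis using 2 eps_SS[of l'] by (simp add: tT_def algebra_simps)
      next
        case 3
        then have "0 < l" using h by simp
        then obtain p where p: "2*k = Suc p" using 3 by (metis gr0_conv_Suc)
        have "odd p" using p by presburger
        then have "eps (2*k) = eps p" using p eps_Suc[of p] by simp
        then show ?thesis using 3 p by (simp add: tT_def)
      qed
    qed
    finally show ?thesis .
  qed
  finally show "(Em k * Bm (2*k)) $$ (h,l) = 0\<^sub>m (2*k) (Suc (2*k)) $$ (h,l)" using h l by simp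
qed (auto simp: Em_def Bm_def)

lemma claim3:
  assumes k: "1 \<le> k"
  shows "Tm k * Bm (2*k) ^\<^sub>m (Suc N) = Cm k ^\<^sub>m N * (Tm k * Bm (2*k))"
proof (induction N)
  case 0
  have "Bm (2*k) ^\<^sub>m (Suc 0) = Bm (2*k)" using Bm_carrier[of "2*k"] by simp
  moreover have "Cm k ^\<^sub>m 0 * (Tm k * Bm (2*k)) = Tm k * Bm (2*k)"
    using Cm_carrier[of k] Tm_carrier[of k] Bm_carrier[of "2*k"] by (simp add: Cm_def Tm_def)
  ultimately show ?case by simp
next
  case (Suc N)
  note B = Bm_carrier[of "2*k"] and T = Tm_carrier[of k] and C = Cm_carrier[of k] and E = Em_carrier[of k]
  have BP: "Bm (2*k) ^\<^sub>m n \<in> carrier_mat (Suc (2*k)) (Suc (2*k))" for n using B by simp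
  have CP: "Cm k ^\<^sub>m n \<in> carrier_mat (2*k) (2*k)" for n using C by simp
  have TB: "Tm k * Bm (2*k) \<in> carrier_mat (2*k) (Suc (2*k))" using T B by simp
  have "Tm k * Bm (2*k) ^\<^sub>m Suc (Suc N) = Tm k * (Bm (2*k) ^\<^sub>m (Suc N) * Bm (2*k))" by simp
  also have "\<dots> = (Tm k * Bm (2*k) ^\<^sub>m (Suc N)) * Bm (2*k)"
    by (rule assoc_mult_mat[OF T BP B, symmetric])
  also have "\<dots> = (Cm k ^\<^sub>m N * (Tm k * Bm (2*k))) * Bm (2*k)" using Suc.IH by simp
  also have "\<dots> = Cm k ^\<^sub>m N * ((Tm k * Bm (2*k)) * Bm (2*k))"
    using assoc_mult_mat[OF CP TB B] by simp
  also have "(Tm k * Bm (2*k)) * Bm (2*k) = (Cm k * Tm k + Em k) * Bm (2*k)" using claim1[OF k] by simp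
  also have "\<dots> = Cm k * Tm k * Bm (2*k) + Em k * Bm (2*k)"
    using add_mult_distrib_mat[of "Cm k * Tm k" "2*k" "Suc (2*k)" "Em k" "Bm (2*k)"] C T E B by simp
  also have "\<dots> = Cm k * (Tm k * Bm (2*k))"
    using claim2[of k] assoc_mult_mat[OF C T B] C TB by simp
  also have "Cm k ^\<^sub>m N * (Cm k * (Tm k * Bm (2*k))) = Cm k ^\<^sub>m (Suc N) * (Tm k * Bm (2*k))"
    using assoc_mult_mat[OF CP C TB] by simp
  finally show ?case .
qed

lemma TB_col:
  assumes k: "1 \<le> k" and h: "h < 2*k"
  shows "(Tm k * Bm (2*k)) $$ (h,0) = (if h = 0 then 1 else 0)"
proof -
  have "(Tm k * Bm (2*k)) $$ (h,0) = (\<Sum>j<Suc (2*k). tT h j * tB (2*k) j 0)"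
    using mult_entry[OF Tm_carrier Bm_carrier] h by (simp add: Tm_def Bm_def)
  also have "\<dots> = tT h 0 + tT h 1"
    using k by (subst sum_tri_right_gen[OF band_tB]) (auto simp: tB_def)
  also have "\<dots> = (if h = 0 then 1 else 0)"
    by (auto simp: tT_def eps_0 eps_1 eps_1')
  finally show ?thesis .
qed

lemma a_Cm:
  assumes k: "1 \<le> k"
  shows "a (Suc N) (4*k) = (Cm k ^\<^sub>m N) $$ (0,0)"
proof -
  have k2: "1 \<le> 2*k" and e4: "4*k = 2*(2*k)" using k by auto
  have "a (Suc N) (4*k) = (Bm (2*k) ^\<^sub>m (Suc N)) $$ (0,0)" unfolding e4 by (rule a_Bm[OF k2])
  also have "\<dots> = (Tm k * Bm (2*k) ^\<^sub>m (Suc N)) $$ (0,0)"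
  proof -
    define X where "X = Bm (2*k) ^\<^sub>m (Suc N)"
    have X: "X \<in> carrier_mat (Suc (2*k)) (Suc (2*k))" unfolding X_def by (rule pow_carrier_mat[OF Bm_carrier])
    have "(Tm k * X) $$ (0,0) = (\<Sum>j<Suc (2*k). Tm k $$ (0,j) * X $$ (j,0))"
      by (rule mult_entry[OF Tm_carrier X]) (use k in auto)
    also have "\<dots> = (\<Sum>j<Suc (2*k). tT 0 j * X $$ (j,0))"
      using k by (intro sum.cong) (auto simp: Tm_def)
    finally have "(Tm k * Bm (2*k) ^\<^sub>m (Suc N)) $$ (0,0) = (\<Sum>j<Suc (2*k). tT 0 j * (Bm (2*k) ^\<^sub>m (Suc N)) $$ (j,0))"
      unfolding X_def .
    also have "\<dots> = tT 0 0 * (Bm (2*k) ^\<^sub>m (Suc N)) $$ (0,0)"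
      by (rule sum_single) (auto simp: tT_def)
    finally show ?thesis by (simp add: tT_def eps_0)
  qed
  also have "\<dots> = (Cm k ^\<^sub>m N * (Tm k * Bm (2*k))) $$ (0,0)" using claim3[OF k] by simp
  also have "\<dots> = (\<Sum>h<2*k. (Cm k ^\<^sub>m N) $$ (0,h) * (Tm k * Bm (2*k)) $$ (h,0))"
    using mult_entry[OF pow_carrier_mat[OF Cm_carrier] mult_carrier_mat[OF Tm_carrier Bm_carrier]] k by simp
  also have "\<dots> = (Cm k ^\<^sub>m N) $$ (0,0) * (Tm k * Bm (2*k)) $$ (0,0)"
    by (rule sum_single) (use k TB_col[OF k] in auto)
  also have "\<dots> = (Cm k ^\<^sub>m N) $$ (0,0)" using TB_col[OF k, of 0] k by simp
  finally show ?thesis .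
qed

lemma D1: "det (mat j j (\<lambda>(i,l). tC i l)) = (-1) ^ (j div 2) * (int j + 1)"
proof -
  have "det (mat j j (\<lambda>(i,l). tC i l)) = (-1) ^ (j div 2) * (int j + 1) \<and>
        det (mat (Suc j) (Suc j) (\<lambda>(i,l). tC i l)) = (-1) ^ (Suc j div 2) * (int (Suc j) + 1)"
  proof (induction j)
    case 0
    have "det (mat 1 1 (\<lambda>(i,l). tC i l)) = 2"
      by (subst det_single) (auto simp: tC_def)
    then show ?case by simp
  next
    case (Suc j)
    have st: "det (mat (j+2) (j+2) (\<lambda>(i,l). tC i l)) = (if even (Suc j) then 2 else -2) * det (mat (Suc j) (Suc j) (\<lambda>(i,l). tC i l))
       + det (mat j j (\<lambda>(i,l). tC i l))"
      by (subst det_tri_step[OF band_tC]) (simp add: tC_def)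
    have "det (mat (Suc (Suc j)) (Suc (Suc j)) (\<lambda>(i,l). tC i l)) = (-1) ^ (Suc (Suc j) div 2) * (int (Suc (Suc j)) + 1)"
    proof (cases "even j")
      case True
      then obtain p where p: "j = 2*p" by blast
      have d0: "det (mat j j (\<lambda>(i,l). tC i l)) = (-1)^p * (2*int p+1)" using Suc.IH p by simp
      have "Suc (2*p) div 2 = p" by simp
      then have d1: "det (mat (Suc j) (Suc j) (\<lambda>(i,l). tC i l)) = (-1)^p * (2*int p+2)" using Suc.IH p by simp
      have ev: "\<not> even (Suc j)" using p by simp
      have "det (mat (Suc (Suc j)) (Suc (Suc j)) (\<lambda>(i,l). tC i l)) = -2 * det (mat (Suc j) (Suc j) (\<lambda>(i,l). tC i l)) + det (mat j j (\<lambda>(i,l). tC i l))"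
        using st ev by simp
      also have "\<dots> = -2 * ((-1)^p * (2*int p+2)) + (-1)^p * (2*int p+1)" using d0 d1 by simp
      also have "\<dots> = (-1)^(Suc p) * (2*int p + 3)" by (simp add: algebra_simps)
      finally have dd: "det (mat (Suc (Suc j)) (Suc (Suc j)) (\<lambda>(i,l). tC i l)) = (-1)^(Suc p) * (2*int p + 3)" .
      have "Suc (Suc j) div 2 = Suc p" "int (Suc (Suc j)) + 1 = 2*int p + 3" using p by auto
      then show ?thesis using dd by simp
    next
      case False
      then obtain p where p: "j = 2*p+1" using oddE by blast
      have "j div 2 = p" using p by simp
      then have d0: "det (mat j j (\<lambda>(i,l). tC i l)) = (-1)^p * (2*int p+2)" using Suc.IH p by simp
      have "Suc j div 2 = Suc p" using p by simp
      then have d1: "det (mat (Suc j) (Suc j) (\<lambda>(i,l). tC i l)) = (-1)^(Suc p) * (2*int p+3)" using Suc.IH p by simp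
      have ev: "even (Suc j)" using p by simp
      have "det (mat (Suc (Suc j)) (Suc (Suc j)) (\<lambda>(i,l). tC i l)) = 2 * det (mat (Suc j) (Suc j) (\<lambda>(i,l). tC i l)) + det (mat j j (\<lambda>(i,l). tC i l))"
        using st ev by simp
      also have "\<dots> = 2 * ((-1)^(Suc p) * (2*int p+3)) + (-1)^p * (2*int p+2)" using d0 d1 by simp
      also have "\<dots> = (-1)^(Suc p) * (2*int p + 4)" by (simp add: algebra_simps)
      finally have dd: "det (mat (Suc (Suc j)) (Suc (Suc j)) (\<lambda>(i,l). tC i l)) = (-1)^(Suc p) * (2*int p + 4)" .
      have "Suc (Suc j) div 2 = Suc p" "int (Suc (Suc j)) + 1 = 2*int p + 4" using p by auto
      then show ?thesis using dd by simp
    qed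
    then show ?case using Suc.IH by simp
  qed
  then show ?thesis by simp
qed

lemma prod_sign: "(\<Prod>j<2*k. (-1::int)^j) = (-1)^k"
proof (induction k)
  case 0 then show ?case by simp
next
  case (Suc k)
  have "(\<Prod>j<2*Suc k. (-1::int)^j) = (\<Prod>j<2*k. (-1::int)^j) * ((-1)^(2*k) * (-1)^(Suc (2*k)))"
    by simp
  also have "(-1::int)^(2*k) * (-1)^(Suc (2*k)) = -1" by simp
  finally show ?case using Suc.IH by simp
qed

lemma case1:
  assumes k: "1 \<le> k"
  shows "det (mat (2*k) (2*k) (\<lambda>(i,j). a (n+i+j+1) (4*k)))
           = (-1) ^ nat \<bar>int k * (int n - 1)\<bar> * (2*int k+1) ^ n"
proof -
  have "mat (2*k) (2*k) (\<lambda>(i,j). a (n+i+j+1) (4*k)) = mat (2*k) (2*k) (\<lambda>(i,j). (Cm k ^\<^sub>m (n+i+j)) $$ (0,0))"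
    using a_Cm[OF k] by auto
  also have "det \<dots> = (\<Prod>j<2*k. (-1)^j) * det (Cm k) ^ n"
    by (rule hankel[OF Cm_carrier]) (auto simp: Cm_def tC_def)
  also have "det (Cm k) = (-1)^k * (2*int k + 1)"
    unfolding Cm_def D1 by simp
  also have "(\<Prod>j<2*k. (-1::int)^j) = (-1)^k" by (rule prod_sign)
  also have "(-1::int)^k * ((-1)^k * (2*int k + 1)) ^ n = (-1)^(k + k*n) * (2*int k + 1)^n"
    by (simp add: power_mult_distrib power_add power_mult)
  also have "(-1::int)^(k + k*n) = (-1) ^ nat \<bar>int k * (int n - 1)\<bar>"
  proof (cases n)
    case 0 then show ?thesis by simp
  next
    case (Suc n')
    have "nat \<bar>int k * (int n - 1)\<bar> = k * n'" using Suc by (simp add: nat_mult_distrib)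
    moreover have "k + k*n = k*n' + 2*k" using Suc by simp
    ultimately show ?thesis by (simp add: power_add power_mult)
  qed
  finally show ?thesis .
qed

theorem theorem51:
  fixes n k :: nat
  assumes "k \<ge> 1"
  shows "det (mat (2*k) (2*k) (\<lambda>(i,j). a (n+i+j+1) (4*k)))
           = (-1) ^ nat \<bar>int k * (int n - 1)\<bar> * (2*int k+1) ^ n
       \<and> det (mat (2*k) (2*k) (\<lambda>(i,j). a (n+i+j) (4*k-2)))
           = (-1) ^ (k*n) * 2 ^ n"
  using case1[OF assms] case2[OF assms] by simp

end
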